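(* Let $H=(U,(A_1,\dots,A_m))$ be a harmonic set system with $|U|<m(m-2)$ and $m\ge 51$. Then one can partition $U=U^{(1)}\sqcup U^{(2)}$ such that the induced set systems $H^{(i)}=(U^{(i)},(A_1\cap U^{(i)},\dots,A_m\cap U^{(i)}))$, $i=1,2$, are harmonic and satisfy $H^{(1)}_I=H^{(2)}_{\emptyset,I}=\emptyset$ for every nonconsecutive $I\subseteq[m]$ of size $3$.
   Context: For a set system $G=(V,(B_1,\dots,B_m))$ and $I_1,I_2\subseteq[m]$, $G_{I_1,I_2}=\bigcap_{i\in I_1}B_i\cap\bigcap_{i\in I_2}(V\setminus B_i)$ (empty intersection $=V$), $G_I=G_{I,\emptyset}$. The run decomposition of a finite set $I$ of positive integers is the partition of sizes, in nonincreasing order, of the maximal runs of consecutive integers in $I$. $G$ is harmonic if $|G_I|=|G_J|$ whenever $I,J\subseteq[m]$ have the same run decomposition. A set of integers is nonconsecutive if no two distinct elements differ by exactly $1$. *)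

theory Defs
  imports Main "HOL-Library.Multiset"
begin

text \<open>A set system G = (V, (B_1,...,B_m)) is represented by a ground set V,
  a family B :: nat => 'a set (only indices 1..m matter) and m.\<close>

definition gsect :: "'a set \<Rightarrow> (nat \<Rightarrow> 'a set) \<Rightarrow> nat set \<Rightarrow> nat set \<Rightarrow> 'a set" where
  "gsect V B I1 I2 = {x \<in> V. (\<forall>i\<in>I1. x \<in> B i) \<and> (\<forall>i\<in>I2. x \<notin> B i)}"

definition max_run :: "nat set \<Rightarrow> nat set \<Rightarrow> bool" where
  "max_run I R \<longleftrightarrow> (\<exists>a b. a \<le> b \<and> R = {a..b} \<and> R \<subseteq> I
      \<and> (a = 0 \<or> a - 1 \<notin> I) \<and> Suc b \<notin> I)"

text \<open>Run decomposition: the multiset of sizes of maximal runs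
  (equivalently, the partition listing these sizes in nonincreasing order).\<close>
definition run_decomp :: "nat set \<Rightarrow> nat multiset" where
  "run_decomp I = image_mset card (mset_set {R. max_run I R})"

definition harmonic :: "'a set \<Rightarrow> (nat \<Rightarrow> 'a set) \<Rightarrow> nat \<Rightarrow> bool" where
  "harmonic V B m \<longleftrightarrow> (\<forall>I J. I \<subseteq> {1..m} \<and> J \<subseteq> {1..m} \<and> run_decomp I = run_decomp J
      \<longrightarrow> card (gsect V B I {}) = card (gsect V B J {}))"

definition nonconsecutive :: "nat set \<Rightarrow> bool" where
  "nonconsecutive I \<longleftrightarrow> (\<forall>i\<in>I. \<forall>j\<in>I. i \<noteq> j \<longrightarrow> j \<noteq> i + 1)"

end

theory Submission
  imports Defs "HOL.Binomial_Plus"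
begin


definition sep :: "nat set \<Rightarrow> nat set \<Rightarrow> bool" where
  "sep I K \<longleftrightarrow> (\<forall>i\<in>I. \<forall>j\<in>K. i \<noteq> j \<and> j \<noteq> i + 1 \<and> i \<noteq> j + 1)"

lemma runs_insert:
  assumes "k \<ge> 1" "k \<notin> I" "k - 1 \<notin> I" "k + 1 \<notin> I"
  shows "{R. max_run (insert k I) R} = insert {k} {R. max_run I R}"
proof (intro set_eqI iffI)
  fix R assume "R \<in> {R. max_run (insert k I) R}"
  then obtain a b where ab: "a \<le> b" "R = {a..b}" "R \<subseteq> insert k I"
      "a = 0 \<or> a - 1 \<notin> insert k I" "Suc b \<notin> insert k I"
    unfolding max_run_def by blast
  show "R \<in> insert {k} {R. max_run I R}"
  proof (cases "k \<in> R")
    case True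
    have "a = k"
    proof (rule ccontr)
      assume "a \<noteq> k" then have "a < k" using True ab by auto
      then have "k - 1 \<in> R" using True ab by auto
      then show False using ab assms by auto
    qed
    moreover have "b = k"
    proof (rule ccontr)
      assume "b \<noteq> k" then have "k < b" using True ab by auto
      then have "k + 1 \<in> R" using True ab by auto
      then show False using ab assms by auto
    qed
    ultimately show ?thesis using ab by auto
  next
    case False
    then have "max_run I R" unfolding max_run_def using ab by blast
    then show ?thesis by auto
  qed
next
  fix R assume "R \<in> insert {k} {R. max_run I R}"
  then consider "R = {k}" | "max_run I R" by auto
  then show "R \<in> {R. max_run (insert k I) R}"
  proof cases
    case 1 then show ?thesis unfolding max_run_def using assms
      by (intro CollectI exI[of _ k]) auto
  next
    case 2
    then obtain a b where ab: "a \<le> b" "R = {a..b}" "R \<subseteq> I"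
      "a = 0 \<or> a - 1 \<notin> I" "Suc b \<notin> I"
      unfolding max_run_def by blast
    have "a - 1 \<noteq> k \<or> a = 0" using ab assms by (cases a) auto
    moreover have "Suc b \<noteq> k" using ab assms by auto
    ultimately show ?thesis unfolding max_run_def using ab by (intro CollectI exI[of _ a] exI[of _ b]) auto
  qed
qed

lemma finite_runs: assumes "finite I" shows "finite {R. max_run I R}"
proof -
  have "{R. max_run I R} \<subseteq> Pow I" unfolding max_run_def by auto
  then show ?thesis using assms finite_subset by blast
qed

lemma run_decomp_insert:
  assumes "finite I" "k \<ge> 1" "k \<notin> I" "k - 1 \<notin> I" "k + 1 \<notin> I"
  shows "run_decomp (insert k I) = add_mset 1 (run_decomp I)"
proof -
  have "{k} \<notin> {R. max_run I R}" using assms unfolding max_run_def by auto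
  then show ?thesis unfolding run_decomp_def runs_insert[OF assms(2-)]
    using finite_runs[OF assms(1)] by simp
qed

lemma run_decomp_nonconsec:
  assumes "finite T" "nonconsecutive T" "0 \<notin> T"
  shows "run_decomp T = replicate_mset (card T) 1"
  using assms
proof (induction T rule: finite_induct)
  case empty
  have e: "{R. max_run {} R} = {}" unfolding max_run_def by auto
  show ?case unfolding run_decomp_def e by simp
next
  case (insert x F)
  have nc: "nonconsecutive F" using insert.prems unfolding nonconsecutive_def by auto
  have H: "\<And>i j. i \<in> insert x F \<Longrightarrow> j \<in> insert x F \<Longrightarrow> i \<noteq> j \<Longrightarrow> j \<noteq> i + 1"
    using insert.prems unfolding nonconsecutive_def by blast
  have "x \<ge> 1" using insert.prems by (cases x) auto
  have "x + 1 \<notin> F" using H[of x "x+1"] by auto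
  have "x - 1 \<notin> F"
  proof
    assume a: "x - 1 \<in> F"
    have "x - 1 \<noteq> x" using \<open>x\<ge>1\<close> by simp
    moreover have "x - 1 + 1 = x" using \<open>x\<ge>1\<close> by simp
    ultimately show False using H[of "x-1" x] a by auto
  qed
  show ?case using insert nc \<open>x + 1 \<notin> F\<close> \<open>x - 1 \<notin> F\<close> \<open>x \<ge> 1\<close> by (simp add: run_decomp_insert)
qed

lemma runs_disjoint:
  assumes "max_run I R1" "max_run I R2" "R1 \<inter> R2 \<noteq> {}"
  shows "R1 = R2"
proof -
  obtain a1 b1 where 1: "a1 \<le> b1" "R1 = {a1..b1}" "R1 \<subseteq> I"
      "a1 = 0 \<or> a1 - 1 \<notin> I" "Suc b1 \<notin> I" using assms(1) unfolding max_run_def by blast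
  obtain a2 b2 where 2: "a2 \<le> b2" "R2 = {a2..b2}" "R2 \<subseteq> I"
      "a2 = 0 \<or> a2 - 1 \<notin> I" "Suc b2 \<notin> I" using assms(2) unfolding max_run_def by blast
  obtain c where c: "c \<in> R1" "c \<in> R2" using assms(3) by auto
  have "a1 = a2"
  proof (rule ccontr)
    assume "a1 \<noteq> a2"
    then consider "a1 < a2" | "a2 < a1" by linarith
    then show False
    proof cases
      case 1 then have "a2 - 1 \<in> R1" using c \<open>R1 = _\<close> \<open>R2 = _\<close> by auto
      then show False using 1 2 \<open>a1 < a2\<close> \<open>R1 \<subseteq> I\<close> by auto
    next
      case 3: 2 then have "a1 - 1 \<in> R2" using c \<open>R1 = _\<close> \<open>R2 = _\<close> by auto
      then show False using 1 2 3 by auto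
    qed
  qed
  moreover have "b1 = b2"
  proof (rule ccontr)
    assume "b1 \<noteq> b2"
    then consider "b1 < b2" | "b2 < b1" by linarith
    then show False
    proof cases
      case 3: 1 then have "Suc b1 \<in> R2" using c 1 2 by auto
      then show False using 1 2 by auto
    next
      case 3: 2 then have "Suc b2 \<in> R1" using c 1 2 by auto
      then show False using 1 2 by auto
    qed
  qed
  ultimately show ?thesis using 1 2 by simp
qed

lemma runs_cover:
  assumes "finite I" "i \<in> I"
  shows "\<exists>R. max_run I R \<and> i \<in> R"
proof -
  define a where "a = (LEAST a. {a..i} \<subseteq> I)"
  have ai: "{a..i} \<subseteq> I" unfolding a_def by (rule LeastI[of _ i]) (use assms in auto)
  have amin: "\<And>a'. {a'..i} \<subseteq> I \<Longrightarrow> a \<le> a'" unfolding a_def by (rule Least_le)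
  define b where "b = (GREATEST b. {i..b} \<subseteq> I)"
  have bex: "\<forall>y. {i..y} \<subseteq> I \<longrightarrow> y \<le> Max I"
  proof (intro allI impI)
    fix y assume y: "{i..y} \<subseteq> I"
    show "y \<le> Max I"
    proof (cases "i \<le> y")
      case True then show ?thesis using y assms Max_ge by fastforce
    next
      case False then show ?thesis using assms Max_ge[of I i] by linarith
    qed
  qed
  have ex: "\<exists>k. {i..k} \<subseteq> I" using assms by (intro exI[of _ i]) auto
  have bi: "{i..b} \<subseteq> I" unfolding b_def
    by (rule GreatestI_ex_nat[where b="Max I"]) (use ex bex in auto)
  have bmax: "\<And>b'. {i..b'} \<subseteq> I \<Longrightarrow> b' \<le> b" unfolding b_def
    by (rule Greatest_le_nat[where b="Max I"]) (use bex in auto)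
  have "a \<le> i" using amin[of i] assms by auto
  have "i \<le> b" using bmax[of i] assms by auto
  have "{a..b} \<subseteq> I"
  proof
    fix x assume "x \<in> {a..b}" then show "x \<in> I" using ai bi by (cases "x \<le> i") auto
  qed
  moreover have "a = 0 \<or> a - 1 \<notin> I"
  proof (rule ccontr)
    assume "\<not> (a = 0 \<or> a - 1 \<notin> I)"
    then have a0: "a > 0" "a - 1 \<in> I" by auto
    have "{a-1..i} \<subseteq> I"
    proof
      fix j assume "j \<in> {a-1..i}"
      then have "j = a - 1 \<or> j \<in> {a..i}" by auto
      then show "j \<in> I" using ai a0 by blast
    qed
    then have "a \<le> a - 1" using amin by blast
    then show False using \<open>\<not> _\<close> by auto
  qed
  moreover have "Suc b \<notin> I"
  proof
    assume "Suc b \<in> I"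
    then have "{i..Suc b} \<subseteq> I" using bi by (auto simp: le_Suc_eq)
    then show False using bmax by fastforce
  qed
  ultimately show ?thesis unfolding max_run_def using \<open>a \<le> i\<close> \<open>i \<le> b\<close>
    by (intro exI[of _ "{a..b}"] conjI exI[of _ a] exI[of _ b]) auto
qed

lemma card_run_decomp:
  assumes "finite I"
  shows "sum_mset (run_decomp I) = card I"
proof -
  let ?R = "{R. max_run I R}"
  have sub: "\<And>R. max_run I R \<Longrightarrow> R \<subseteq> I" unfolding max_run_def by blast
  have "I = \<Union>?R"
  proof
    show "I \<subseteq> \<Union>?R" using runs_cover[OF assms] by blast
    show "\<Union>?R \<subseteq> I" using sub by blast
  qed
  moreover have "card (\<Union>?R) = sum card ?R"
    apply (rule card_Union_disjoint)
    subgoal using runs_disjoint unfolding pairwise_def disjnt_def by blast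
    using finite_runs[OF assms] sub assms by (auto intro: finite_subset)
  ultimately show ?thesis unfolding run_decomp_def
    by (simp add: sum_unfold_sum_mset)
qed



lemma choose3: "6 * (n choose 3) = n * (n - 1) * (n - 2)"
proof (induction n)
  case 0 then show ?case by simp
next
  case (Suc n)
  have "Suc n choose 3 = (n choose 2) + (n choose 3)" by (simp add: numeral_3_eq_3 numeral_2_eq_2)
  moreover have "2 * (n choose 2) = n * (n - 1)"
  proof -
    have "even (n * (n - 1))" by (cases n) auto
    then show ?thesis by (simp add: choose_two)
  qed
  ultimately have "6 * (Suc n choose 3) = 3 * (n * (n - 1)) + n * (n - 1) * (n - 2)" using Suc by simp
  also have "\<dots> = Suc n * (Suc n - 1) * (Suc n - 2)"
    by (cases n; cases "n - 1"; simp add: algebra_simps)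
  finally show ?case .
qed

lemma gsect_split:
  "gsect V B I (insert k K) = gsect V B I K - gsect V B (insert k I) K"
  "gsect V B (insert k I) K \<subseteq> gsect V B I K"
  unfolding gsect_def by auto

lemma gsect_sub: "gsect V B I K \<subseteq> V" unfolding gsect_def by auto

lemma nonconsec_subset: "nonconsecutive K \<Longrightarrow> K' \<subseteq> K \<Longrightarrow> nonconsecutive K'"
  unfolding nonconsecutive_def by blast

lemma sep_elem:
  assumes "sep I K" "k \<in> K" "k \<ge> 1"
  shows "k \<notin> I" "k - 1 \<notin> I" "k + 1 \<notin> I"
proof -
  show "k \<notin> I" using assms unfolding sep_def by blast
  show "k + 1 \<notin> I" using assms unfolding sep_def by blast
  show "k - 1 \<notin> I"
  proof
    assume "k - 1 \<in> I"
    then have "k \<noteq> k - 1 + 1" using assms unfolding sep_def by blast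
    then show False using assms by simp
  qed
qed

lemma sep_insert:
  assumes "sep I K" "k \<in> K" "nonconsecutive K"
  shows "sep (insert k I) (K - {k})"
  using assms unfolding sep_def nonconsecutive_def by (metis DiffE insert_iff singletonI)

lemma sep_from_nonconsec:
  assumes "nonconsecutive W" "I \<subseteq> W" "K \<subseteq> W" "I \<inter> K = {}"
  shows "sep I K"
proof -
  have H: "\<And>a b. a \<in> W \<Longrightarrow> b \<in> W \<Longrightarrow> a \<noteq> b \<Longrightarrow> b \<noteq> a + 1"
    using assms(1) unfolding nonconsecutive_def by blast
  show ?thesis unfolding sep_def
  proof (intro ballI conjI)
    fix i j assume ij: "i \<in> I" "j \<in> K"
    then show ne: "i \<noteq> j" using assms(4) by blast
    show "j \<noteq> i + 1" using H[of i j] ij ne assms(2,3) by blast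
    show "i \<noteq> j + 1" using H[of j i] ij ne assms(2,3) by auto
  qed
qed

lemma fin_sub: "X \<subseteq> {1..(m::nat)} \<Longrightarrow> finite X"
  by (rule finite_subset) auto

lemma sep_mono: "sep I K \<Longrightarrow> K0 \<subseteq> K \<Longrightarrow> sep I K0"
  unfolding sep_def by blast

lemma INV:
  assumes fin: "finite V" and harm: "harmonic V B m"
  shows "card K = n \<Longrightarrow> card K' = n \<Longrightarrow> run_decomp I = run_decomp I' \<Longrightarrow>
    I \<subseteq> {1..m} \<Longrightarrow> I' \<subseteq> {1..m} \<Longrightarrow> K \<subseteq> {1..m} \<Longrightarrow> K' \<subseteq> {1..m} \<Longrightarrow>
    nonconsecutive K \<Longrightarrow> nonconsecutive K' \<Longrightarrow> sep I K \<Longrightarrow> sep I' K' \<Longrightarrow>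
    card (gsect V B I K) = card (gsect V B I' K')"
proof (induction n arbitrary: I K I' K')
  case 0
  have "K = {}" using 0(1) fin_sub[OF 0(6)] by simp
  moreover have "K' = {}" using 0(2) fin_sub[OF 0(7)] by simp
  ultimately show ?case using harm 0(3,4,5) unfolding harmonic_def by blast
next
  case (Suc n)
  have fK: "finite K" "finite K'" using fin_sub Suc.prems(6,7) by auto
  obtain k where k: "k \<in> K" using Suc.prems(1) by (metis card.empty ex_in_conv nat.distinct(1))
  obtain k' where k': "k' \<in> K'" using Suc.prems(2) by (metis card.empty ex_in_conv nat.distinct(1))
  define K0 where "K0 = K - {k}"
  define K0' where "K0' = K' - {k'}"
  have KK: "K = insert k K0" "K' = insert k' K0'" using k k' K0_def K0'_def by auto
  have c0: "card K0 = n" "card K0' = n"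
    using Suc.prems(1,2) k k' fK unfolding K0_def K0'_def by auto
  have k1: "k \<ge> 1" "k' \<ge> 1" using k k' Suc.prems(6,7) by auto
  have fI: "finite I" "finite I'" using Suc.prems(4,5) fin_sub by auto
  have rd: "run_decomp (insert k I) = run_decomp (insert k' I')"
    using run_decomp_insert[OF fI(1) k1(1) sep_elem[OF Suc.prems(10) k k1(1)]]
      run_decomp_insert[OF fI(2) k1(2) sep_elem[OF Suc.prems(11) k' k1(2)]] Suc.prems(3) by simp
  have s1: "sep (insert k I) K0" using sep_insert[OF Suc.prems(10) k Suc.prems(8)] K0_def by simp
  have s2: "sep (insert k' I') K0'" using sep_insert[OF Suc.prems(11) k' Suc.prems(9)] K0'_def by simp
  have s3: "sep I K0" using sep_mono[OF Suc.prems(10)] K0_def by blast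
  have s4: "sep I' K0'" using sep_mono[OF Suc.prems(11)] K0'_def by blast
  have nc: "nonconsecutive K0" "nonconsecutive K0'"
    using nonconsec_subset[OF Suc.prems(8)] nonconsec_subset[OF Suc.prems(9)] K0_def K0'_def by auto
  have sub: "K0 \<subseteq> {1..m}" "K0' \<subseteq> {1..m}" using Suc.prems(6,7) K0_def K0'_def by auto
  have sub2: "insert k I \<subseteq> {1..m}" "insert k' I' \<subseteq> {1..m}" using Suc.prems(4-7) k k' by auto
  have e1: "card (gsect V B I K0) = card (gsect V B I' K0')"
    by (rule Suc.IH[OF c0 Suc.prems(3,4,5) sub nc s3 s4])
  have e2: "card (gsect V B (insert k I) K0) = card (gsect V B (insert k' I') K0')"
    by (rule Suc.IH[OF c0 rd sub2 sub nc s1 s2])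
  have fg: "finite (gsect V B I K0)" "finite (gsect V B I' K0')"
    using fin gsect_sub finite_subset by metis+
  show ?case unfolding KK gsect_split(1)
    using card_Diff_subset[OF finite_subset[OF gsect_split(2) fg(1)] gsect_split(2)]
      card_Diff_subset[OF finite_subset[OF gsect_split(2) fg(2)] gsect_split(2)] e1 e2
    by simp
qed



locale hsys =
  fixes U :: "'a set" and A :: "nat \<Rightarrow> 'a set" and m :: nat
  assumes fin: "finite U" and harm: "harmonic U A m"
    and small: "card U < m * (m - 2)" and m51: "m \<ge> 51"
begin

definition w where "w = (m + 1) div 2"
definition Od where "Od = (\<lambda>j. 2*j+1) ` {..<w}"

lemma w26: "w \<ge> 26" using m51 unfolding w_def by simp

lemma Od_mem: "j < w \<Longrightarrow> 2*j+1 \<in> Od" unfolding Od_def by auto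

lemma Od_sub: "Od \<subseteq> {1..m}"
proof
  fix i assume "i \<in> Od"
  then obtain j where "j < w" "i = 2*j+1" unfolding Od_def by auto
  then show "i \<in> {1..m}" unfolding w_def by auto
qed

lemma card_Od: "card Od = w"
  unfolding Od_def by (subst card_image) (auto simp: inj_on_def)

lemma fin_Od: "finite Od" unfolding Od_def by simp

lemma nc_Od: "nonconsecutive Od"
  unfolding nonconsecutive_def Od_def by auto

lemma bound: "m * (m - 2) \<le> w choose 3"
proof -
  have a: "m \<le> 2*w" "m - 2 \<le> 2*(w-1)" by (simp_all add: w_def)
  have "m * (m - 2) \<le> (2*w) * (2*(w-1))" by (rule mult_le_mono[OF a])
  also have "\<dots> = 4 * (w*(w-1))" by simp
  finally have b: "6 * (m * (m - 2)) \<le> 24 * (w*(w-1))" by simp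
  have "24 * (w*(w-1)) \<le> (w-2) * (w*(w-1))" using w26 by (intro mult_le_mono1) simp
  also have "\<dots> = 6 * (w choose 3)" using choose3[of w] by (simp add: algebra_simps)
  finally show ?thesis using b by simp
qed

lemma binom3:
  assumes "3 \<le> k" "k + 3 \<le> w"
  shows "w choose 3 \<le> w choose k"
proof (cases "2*k \<le> w")
  case True then show ?thesis using binomial_mono[of 3 k w] assms by simp
next
  case False
  have "w choose k = w choose (w - k)" using assms binomial_symmetric[of k w] by simp
  moreover have "w choose 3 \<le> w choose (w - k)" using binomial_mono[of 3 "w-k" w] assms False by simp
  ultimately show ?thesis by simp
qed

lemma zero_notin: "X \<subseteq> {1..(m'::nat)} \<Longrightarrow> 0 \<notin> X" by auto

lemma gsect_Od:
  assumes "z \<in> gsect U A X (Od - X)" "X \<subseteq> Od"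
  shows "{i \<in> Od. z \<in> A i} = X"
  using assms unfolding gsect_def by auto

lemma BIG0:
  assumes s: "sep T1 T2" and nc1: "nonconsecutive T1" and nc2: "nonconsecutive T2"
    and c1: "card T1 = 3" and c2: "card T2 = 3" and m1: "T1 \<subseteq> {1..m}" and m2: "T2 \<subseteq> {1..m}"
  shows "gsect U A T1 T2 = {}"
proof (rule ccontr)
  assume ne: "gsect U A T1 T2 \<noteq> {}"
  define J1 where "J1 = {1,3,5::nat}"
  define J2 where "J2 = {7,9,11::nat}"
  have "1 \<in> Od" using Od_mem[of 0] w26 by simp
  moreover have "3 \<in> Od" using Od_mem[of 1] w26 by simp
  moreover have "5 \<in> Od" using Od_mem[of 2] w26 by simp
  moreover have "7 \<in> Od" using Od_mem[of 3] w26 by simp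
  moreover have "9 \<in> Od" using Od_mem[of 4] w26 by simp
  moreover have "11 \<in> Od" using Od_mem[of 5] w26 by simp
  ultimately have J: "J1 \<subseteq> Od" "J2 \<subseteq> Od" unfolding J1_def J2_def by auto
  have Jd: "J1 \<inter> J2 = {}" "card J1 = 3" "card J2 = 3" unfolding J1_def J2_def by auto
  have sJ: "sep J1 J2" by (rule sep_from_nonconsec[OF nc_Od J Jd(1)])
  have ncJ: "nonconsecutive J1" "nonconsecutive J2" using nonconsec_subset[OF nc_Od] J by auto
  have JM: "J1 \<subseteq> {1..m}" "J2 \<subseteq> {1..m}" using J Od_sub by auto
  have rd: "run_decomp T1 = run_decomp J1"
    using run_decomp_nonconsec[OF fin_sub[OF m1] nc1 zero_notin[OF m1]]
      run_decomp_nonconsec[OF fin_sub[OF JM(1)] ncJ(1) zero_notin[OF JM(1)]] c1 Jd by simp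
  have "card (gsect U A T1 T2) = card (gsect U A J1 J2)"
    by (rule INV[OF fin harm c2 Jd(3) rd m1 JM(1) m2 JM(2) nc2 ncJ(2) s sJ])
  moreover have "card (gsect U A T1 T2) > 0"
    using ne fin gsect_sub finite_subset card_gt_0_iff by metis
  ultimately have "gsect U A J1 J2 \<noteq> {}" by auto
  then obtain y where y: "y \<in> gsect U A J1 J2" by auto
  define T where "T = {i \<in> Od. y \<in> A i}"
  define k where "k = card T"
  have TO: "T \<subseteq> Od" unfolding T_def by auto
  have "J1 \<subseteq> T" using y J unfolding T_def gsect_def by auto
  then have k3: "3 \<le> k" unfolding k_def using Jd card_mono[OF finite_subset[OF TO fin_Od]] by metis
  have "J2 \<subseteq> Od - T" using y J unfolding T_def gsect_def by auto
  then have "3 \<le> card (Od - T)" using Jd card_mono[of "Od - T" J2] fin_Od by auto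
  moreover have cOT: "card (Od - T) = w - k"
    unfolding k_def using card_Diff_subset[OF finite_subset[OF TO fin_Od] TO] card_Od by simp
  ultimately have kw: "k + 3 \<le> w" by simp
  have yT: "y \<in> gsect U A T (Od - T)" using y unfolding T_def gsect_def by auto
  define F where "F = {X. X \<subseteq> Od \<and> card X = k}"
  have cF: "card F = w choose k" unfolding F_def using n_subsets[OF fin_Od, of k] card_Od by simp
  have TM: "T \<subseteq> {1..m}" using TO Od_sub by auto
  have nne: "gsect U A X (Od - X) \<noteq> {}" if X: "X \<in> F" for X
  proof -
    have XO: "X \<subseteq> Od" "card X = k" using X unfolding F_def by auto
    have XM: "X \<subseteq> {1..m}" "Od - X \<subseteq> {1..m}" "Od - T \<subseteq> {1..m}" using XO Od_sub by auto
    have cX: "card (Od - X) = w - k"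
      using card_Diff_subset[OF finite_subset[OF XO(1) fin_Od] XO(1)] card_Od XO by simp
    have ncT: "nonconsecutive T" "nonconsecutive X" "nonconsecutive (Od - T)" "nonconsecutive (Od - X)"
      using nonconsec_subset[OF nc_Od] TO XO by auto
    have rdX: "run_decomp T = run_decomp X"
      using run_decomp_nonconsec[OF fin_sub[OF TM] ncT(1) zero_notin[OF TM]]
        run_decomp_nonconsec[OF fin_sub[OF XM(1)] ncT(2) zero_notin[OF XM(1)]] XO k_def by simp
    have sT: "sep T (Od - T)" "sep X (Od - X)"
      using sep_from_nonconsec[OF nc_Od] TO XO by auto
    have "card (gsect U A T (Od - T)) = card (gsect U A X (Od - X))"
      by (rule INV[OF fin harm cOT cX rdX TM XM(1) XM(3) XM(2) ncT(3) ncT(4) sT])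
    moreover have "card (gsect U A T (Od - T)) > 0"
      using yT fin gsect_sub finite_subset card_gt_0_iff by (metis empty_iff)
    ultimately show ?thesis by auto
  qed
  define phi where "phi = (\<lambda>X. SOME z. z \<in> gsect U A X (Od - X))"
  have phi: "phi X \<in> gsect U A X (Od - X)" if "X \<in> F" for X
    unfolding phi_def using nne[OF that] by (metis ex_in_conv someI_ex)
  have inj: "inj_on phi F"
  proof (rule inj_onI)
    fix X Y assume XY: "X \<in> F" "Y \<in> F" "phi X = phi Y"
    have "X = {i \<in> Od. phi X \<in> A i}" using gsect_Od[OF phi[OF XY(1)]] XY(1) unfolding F_def by auto
    also have "\<dots> = {i \<in> Od. phi Y \<in> A i}" using XY(3) by simp
    also have "\<dots> = Y" using gsect_Od[OF phi[OF XY(2)]] XY(2) unfolding F_def by auto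
    finally show "X = Y" .
  qed
  have "phi ` F \<subseteq> U"
  proof (rule image_subsetI)
    fix X assume "X \<in> F"
    then show "phi X \<in> U" using phi[of X] gsect_sub[of U A X "Od - X"] by (meson subsetD)
  qed
  then have "card F \<le> card U" using card_inj_on_le[OF inj _ fin] by blast
  moreover have "w choose 3 \<le> w choose k" by (rule binom3[OF k3 kw])
  ultimately show False using bound small cF by linarith
qed

end


lemma sep_sym: "sep I K \<Longrightarrow> sep K I" unfolding sep_def by auto

lemma gsect_restrict: "V' \<subseteq> V \<Longrightarrow> gsect V' (\<lambda>i. B i \<inter> V') I K = gsect V B I K \<inter> V'"
  unfolding gsect_def by auto

lemma triple5:
  assumes "finite (X::nat set)" "card X \<ge> 5"
  shows "\<exists>T \<subseteq> X. nonconsecutive T \<and> card T = 3"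
proof -
  have "X \<noteq> {}" using assms by auto
  define a where "a = Min X"
  have a: "a \<in> X" "\<And>y. y \<in> X \<Longrightarrow> a \<le> y" using assms \<open>X \<noteq> {}\<close> unfolding a_def by auto
  define X1 where "X1 = X - {a, a+1}"
  have "card X - card {a, a+1} \<le> card X1" unfolding X1_def by (rule diff_card_le_card_Diff) simp
  moreover have "card {a, a+1} \<le> 2" by (simp add: card_insert_if)
  ultimately have c1: "card X1 \<ge> 3" using assms by linarith
  have f1: "finite X1" using assms unfolding X1_def by auto
  then have "X1 \<noteq> {}" using c1 by auto
  define b where "b = Min X1"
  have b: "b \<in> X1" "\<And>y. y \<in> X1 \<Longrightarrow> b \<le> y" using f1 \<open>X1 \<noteq> {}\<close> unfolding b_def by auto
  define X2 where "X2 = X1 - {b, b+1}"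
  have "card X1 - card {b, b+1} \<le> card X2" unfolding X2_def by (rule diff_card_le_card_Diff) simp
  moreover have "card {b, b+1} \<le> 2" by (simp add: card_insert_if)
  ultimately have "card X2 \<ge> 1" using c1 by linarith
  then obtain c where c: "c \<in> X2" by (metis card.empty ex_in_conv not_one_le_zero)
  have ab: "a + 2 \<le> b" using b(1) a(2)[of b] unfolding X1_def by auto
  have bc: "b + 2 \<le> c" using c b(2)[of c] unfolding X2_def by auto
  have "c \<in> X" "b \<in> X" using c b(1) unfolding X1_def X2_def by auto
  then have "{a,b,c} \<subseteq> X" using a by auto
  moreover have "nonconsecutive {a,b,c}" unfolding nonconsecutive_def using ab bc by auto
  moreover have "card {a,b,c} = 3" using ab bc by auto
  ultimately show ?thesis by blast
qed

context hsys
begin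

lemma far_odd:
  assumes T: "T \<subseteq> {1..m}" "card T = 3" and P: "card {i \<in> Od. P i} \<le> 2"
  shows "\<exists>T'. T' \<subseteq> Od \<and> card T' = 3 \<and> (\<forall>i\<in>T'. \<not> P i) \<and> sep T T'"
proof -
  define Y where "Y = T \<union> Suc ` T \<union> (\<lambda>t. t - 1) ` T"
  define Q where "Q = {i \<in> Od. P i}"
  define Z where "Z = Od - Q - Y"
  have fT: "finite T" using fin_sub[OF T(1)] .
  have fQ: "finite Q" unfolding Q_def using fin_Od by auto
  have fY: "finite Y" unfolding Y_def using fT by auto
  have "card Y \<le> card (T \<union> Suc ` T) + card ((\<lambda>t. t - 1) ` T)" unfolding Y_def by (rule card_Un_le)
  also have "\<dots> \<le> card T + card (Suc ` T) + card ((\<lambda>t. t - 1) ` T)" using card_Un_le[of T "Suc ` T"] by simp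
  also have "\<dots> \<le> 9" using card_image_le[OF fT, of Suc] card_image_le[OF fT, of "\<lambda>t. t - 1"] T(2) by simp
  finally have cY: "card Y \<le> 9" .
  have "card Od - card Q \<le> card (Od - Q)" by (rule diff_card_le_card_Diff[OF fQ])
  moreover have "card (Od - Q) - card Y \<le> card Z" unfolding Z_def by (rule diff_card_le_card_Diff[OF fY])
  ultimately have "card Z \<ge> 3" using card_Od w26 cY P unfolding Q_def by linarith
  then obtain T' where T': "T' \<subseteq> Z" "card T' = 3" by (meson obtain_subset_with_card_n)
  have "T' \<subseteq> Od" "\<forall>i\<in>T'. \<not> P i" using T' unfolding Z_def Q_def by auto
  moreover have "sep T T'"
    unfolding sep_def
  proof (intro ballI conjI)
    fix t i assume ti: "t \<in> T" "i \<in> T'"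
    then have iY: "i \<notin> Y" using T' unfolding Z_def by auto
    then show "t \<noteq> i" using ti unfolding Y_def by auto
    show "i \<noteq> t + 1" using iY ti unfolding Y_def by auto
    show "t \<noteq> i + 1"
    proof
      assume "t = i + 1" then have "i = t - 1" by simp
      then show False using iY ti unfolding Y_def by auto
    qed
  qed
  ultimately show ?thesis using T' by blast
qed

lemma BIGmix:
  assumes x: "x \<in> U"
    and T1: "T1 \<subseteq> {1..m}" "nonconsecutive T1" "card T1 = 3" "\<forall>i\<in>T1. x \<in> A i"
    and T2: "T2 \<subseteq> {1..m}" "nonconsecutive T2" "card T2 = 3" "\<forall>i\<in>T2. x \<notin> A i"
  shows False
proof -
  have fQ: "finite {i \<in> Od. P i}" for P using fin_Od by auto
  have "card {i \<in> Od. x \<in> A i} \<le> 2 \<or> card {i \<in> Od. \<not> x \<in> A i} \<le> 2"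
  proof (rule ccontr)
    assume "\<not> ?thesis"
    then have c: "3 \<le> card {i \<in> Od. x \<in> A i}" "3 \<le> card {i \<in> Od. \<not> x \<in> A i}" by auto
    obtain S1 where S1: "S1 \<subseteq> {i \<in> Od. x \<in> A i}" "card S1 = 3" using obtain_subset_with_card_n[OF c(1)] by metis
    obtain S2 where S2: "S2 \<subseteq> {i \<in> Od. \<not> x \<in> A i}" "card S2 = 3" using obtain_subset_with_card_n[OF c(2)] by metis
    have sub: "S1 \<subseteq> Od" "S2 \<subseteq> Od" "S1 \<inter> S2 = {}" using S1 S2 by auto
    have s: "sep S1 S2" by (rule sep_from_nonconsec[OF nc_Od sub])
    have nc: "nonconsecutive S1" "nonconsecutive S2" using nonconsec_subset[OF nc_Od] sub by auto
    have M: "S1 \<subseteq> {1..m}" "S2 \<subseteq> {1..m}" using sub Od_sub by auto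
    have "gsect U A S1 S2 = {}" by (rule BIG0[OF s nc S1(2) S2(2) M])
    moreover have "x \<in> gsect U A S1 S2" using x S1 S2 unfolding gsect_def by auto
    ultimately show False by auto
  qed
  then show False
  proof
    assume "card {i \<in> Od. x \<in> A i} \<le> 2"
    from far_odd[OF T1(1) T1(3) this] obtain T' where
      T': "T' \<subseteq> Od" "card T' = 3" "\<forall>i\<in>T'. \<not> x \<in> A i" "sep T1 T'" by blast
    have "gsect U A T1 T' = {}"
      by (rule BIG0[OF T'(4) T1(2) nonconsec_subset[OF nc_Od T'(1)] T1(3) T'(2) T1(1)]) (use T'(1) Od_sub in auto)
    moreover have "x \<in> gsect U A T1 T'" using x T1 T' unfolding gsect_def by auto
    ultimately show False by auto
  next
    assume "card {i \<in> Od. \<not> x \<in> A i} \<le> 2"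
    from far_odd[OF T2(1) T2(3) this] obtain T' where
      T': "T' \<subseteq> Od" "card T' = 3" "\<forall>i\<in>T'. \<not> \<not> x \<in> A i" "sep T2 T'" by blast
    have "gsect U A T' T2 = {}"
      by (rule BIG0[OF sep_sym[OF T'(4)] nonconsec_subset[OF nc_Od T'(1)] T2(2) T'(2) T2(3) _ T2(1)]) (use T'(1) Od_sub in auto)
    moreover have "x \<in> gsect U A T' T2" using x T2 T' unfolding gsect_def by auto
    ultimately show False by auto
  qed
qed

definition hasT where
  "hasT x \<longleftrightarrow> (\<exists>T. T \<subseteq> {1..m} \<and> nonconsecutive T \<and> card T = 3 \<and> (\<forall>i\<in>T. x \<in> A i))"

definition U1 where "U1 = {x \<in> U. \<not> hasT x}"

lemma U2_avoid:
  assumes "hasT x" "K \<subseteq> {1..m}" "nonconsecutive K" "card K \<ge> 3"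
  shows "x \<notin> gsect U A I K"
proof
  assume xg: "x \<in> gsect U A I K"
  obtain K3 where K3: "K3 \<subseteq> K" "card K3 = 3" using obtain_subset_with_card_n[OF assms(4)] by metis
  obtain T where T: "T \<subseteq> {1..m}" "nonconsecutive T" "card T = 3" "\<forall>i\<in>T. x \<in> A i"
    using assms(1) unfolding hasT_def by blast
  show False
    by (rule BIGmix[OF _ T, of K3]) (use xg K3 assms(2,3) nonconsec_subset in \<open>auto simp: gsect_def\<close>)
qed

lemma G1_empty:
  assumes "I \<subseteq> {1..m}" "card I \<ge> 5"
  shows "gsect U A I K \<inter> U1 = {}"
proof -
  obtain T where T: "T \<subseteq> I" "nonconsecutive T" "card T = 3" using triple5[OF fin_sub[OF assms(1)] assms(2)] by blast
  show ?thesis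
  proof (rule ccontr)
    assume "gsect U A I K \<inter> U1 \<noteq> {}"
    then obtain x where x: "x \<in> gsect U A I K" "x \<in> U1" by blast
    then have "hasT x" unfolding hasT_def using T assms(1) unfolding gsect_def by blast
    then show False using x unfolding U1_def by auto
  qed
qed

lemma far_exists:
  assumes "X \<subseteq> {1..m}" "card X \<le> 16"
  shows "\<exists>k. k \<in> {1..m} \<and> sep X {k}"
proof -
  define Y where "Y = X \<union> Suc ` X \<union> (\<lambda>t. t - 1) ` X"
  have fX: "finite X" using fin_sub[OF assms(1)] .
  have "card Y \<le> card (X \<union> Suc ` X) + card ((\<lambda>t. t - 1) ` X)" unfolding Y_def by (rule card_Un_le)
  also have "\<dots> \<le> card X + card (Suc ` X) + card ((\<lambda>t. t - 1) ` X)" using card_Un_le[of X "Suc ` X"] by simp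
  also have "\<dots> \<le> 48" using card_image_le[OF fX, of Suc] card_image_le[OF fX, of "\<lambda>t. t - 1"] assms(2) by simp
  finally have cY: "card Y \<le> 48" .
  have fY: "finite Y" unfolding Y_def using fX by auto
  have "card {1..m} - card Y \<le> card ({1..m} - Y)" by (rule diff_card_le_card_Diff[OF fY])
  then have "card ({1..m} - Y) > 0" using cY m51 by simp
  then obtain k where k: "k \<in> {1..m}" "k \<notin> Y" by (metis Diff_iff card_gt_0_iff ex_in_conv)
  have "sep X {k}" unfolding sep_def
  proof (intro ballI conjI)
    fix t i assume ti: "t \<in> X" "i \<in> {k}"
    then show "t \<noteq> i" using k unfolding Y_def by auto
    show "i \<noteq> t + 1" using k ti unfolding Y_def by auto
    show "t \<noteq> i + 1"
    proof
      assume "t = i + 1" then have "k = t - 1" using ti by simp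
      then show False using k ti unfolding Y_def by auto
    qed
  qed
  then show ?thesis using k by blast
qed

end


context hsys
begin

lemma U1_sub: "U1 \<subseteq> U" unfolding U1_def by auto

lemma split_far:
  assumes "k \<in> {1..m}" "sep (I \<union> K) {k}" "I \<subseteq> {1..m}" "K \<subseteq> {1..m}"
    "nonconsecutive K" "sep I K"
  shows "k \<notin> K" "k \<notin> I" "insert k K \<subseteq> {1..m}" "insert k I \<subseteq> {1..m}"
    "nonconsecutive (insert k K)" "sep I (insert k K)" "sep (insert k I) K"
    "run_decomp (insert k I) = add_mset 1 (run_decomp I)"
    "card (insert k K) = Suc (card K)" "card (insert k I) = Suc (card I)"
    "card I < m"
    "gsect U A I K \<inter> U1 = (gsect U A I (insert k K) \<inter> U1) \<union> (gsect U A (insert k I) K \<inter> U1)"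
    "(gsect U A I (insert k K) \<inter> U1) \<inter> (gsect U A (insert k I) K \<inter> U1) = {}"
proof -
  have sI: "sep I {k}" and sK: "sep K {k}" using assms(2) unfolding sep_def by auto
  show kK: "k \<notin> K" using sK unfolding sep_def by auto
  show kI: "k \<notin> I" using sI unfolding sep_def by auto
  show "insert k K \<subseteq> {1..m}" "insert k I \<subseteq> {1..m}" using assms by auto
  show "nonconsecutive (insert k K)" using assms(5) sK unfolding nonconsecutive_def sep_def by auto
  show "sep I (insert k K)" using assms(6) sI unfolding sep_def by auto
  show "sep (insert k I) K" using assms(6) sep_sym[OF sK] unfolding sep_def by auto
  have k1: "k \<ge> 1" using assms(1) by auto
  have e: "k \<notin> I" "k - 1 \<notin> I" "k + 1 \<notin> I" using sep_elem[OF sI _ k1] by auto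
  show "run_decomp (insert k I) = add_mset 1 (run_decomp I)"
    by (rule run_decomp_insert[OF fin_sub[OF assms(3)] k1 e])
  show "card (insert k K) = Suc (card K)" using kK fin_sub[OF assms(4)] by simp
  show "card (insert k I) = Suc (card I)" using kI fin_sub[OF assms(3)] by simp
  have "I \<subset> {1..m}" using assms(1,3) kI by auto
  then show "card I < m" using psubset_card_mono[of "{1..m}" I] by simp
  show "gsect U A I K \<inter> U1 = (gsect U A I (insert k K) \<inter> U1) \<union> (gsect U A (insert k I) K \<inter> U1)"
    unfolding gsect_def by auto
  show "(gsect U A I (insert k K) \<inter> U1) \<inter> (gsect U A (insert k I) K \<inter> U1) = {}"
    unfolding gsect_def by auto
qed

lemma U1C:
  "n = 4 * (m - card I) + (3 - card K) \<Longrightarrow> card K = card K' \<Longrightarrow> card I = card I' \<Longrightarrow>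
    run_decomp I = run_decomp I' \<Longrightarrow>
    I \<subseteq> {1..m} \<Longrightarrow> I' \<subseteq> {1..m} \<Longrightarrow> K \<subseteq> {1..m} \<Longrightarrow> K' \<subseteq> {1..m} \<Longrightarrow>
    nonconsecutive K \<Longrightarrow> nonconsecutive K' \<Longrightarrow> sep I K \<Longrightarrow> sep I' K' \<Longrightarrow>
    card (gsect U A I K \<inter> U1) = card (gsect U A I' K' \<inter> U1)"
proof (induction n arbitrary: I K I' K' rule: less_induct)
  case (less n)
  note P = less.prems
  show ?case
  proof (cases "card K \<ge> 3")
    case True
    have T2: "card K' \<ge> 3" using True P(2) by simp
    have "gsect U A I K \<inter> U1 = gsect U A I K"
    proof -
      have "x \<in> U1" if x: "x \<in> gsect U A I K" for x
      proof -
        have "\<not> hasT x" using U2_avoid[OF _ P(7) P(9) True] x by blast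
        then show ?thesis using x gsect_sub[of U A I K] unfolding U1_def by auto
      qed
      then show ?thesis by blast
    qed
    moreover have "gsect U A I' K' \<inter> U1 = gsect U A I' K'"
    proof -
      have "x \<in> U1" if x: "x \<in> gsect U A I' K'" for x
      proof -
        have "\<not> hasT x" using U2_avoid[OF _ P(8) P(10) T2] x by blast
        then show ?thesis using x gsect_sub[of U A I' K'] unfolding U1_def by auto
      qed
      then show ?thesis by blast
    qed
    moreover have "card (gsect U A I K) = card (gsect U A I' K')"
      by (rule INV[OF fin harm refl P(2)[symmetric] P(4-12)])
    ultimately show ?thesis by simp
  next
    case False
    show ?thesis
    proof (cases "card I \<ge> 15")
      case True
      then show ?thesis using G1_empty[OF P(5)] G1_empty[OF P(6)] P(3) by simp
    next
      case False2: False
      have c16: "card (I \<union> K) \<le> 16" "card (I' \<union> K') \<le> 16"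
        using card_Un_le[of I K] card_Un_le[of I' K'] False False2 P(2,3) by linarith+
      obtain k where k: "k \<in> {1..m}" "sep (I \<union> K) {k}" using far_exists[OF _ c16(1)] P(5,7) by auto
      obtain k' where k': "k' \<in> {1..m}" "sep (I' \<union> K') {k'}" using far_exists[OF _ c16(2)] P(6,8) by auto
      note S = split_far[OF k P(5) P(7) P(9) P(11)]
      note S' = split_far[OF k' P(6) P(8) P(10) P(12)]
      have fin1: "finite (gsect U A X Y \<inter> U1)" for X Y using finite_subset[OF gsect_sub[of U A X Y] fin] by simp
      have e1: "card (gsect U A I (insert k K) \<inter> U1) = card (gsect U A I' (insert k' K') \<inter> U1)"
      proof -
        have lt: "4 * (m - card I) + (3 - card (insert k K)) < n" using P(1) S(9) False by arith
        have cc: "card (insert k K) = card (insert k' K')" using S(9) S'(9) P(2) by simp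
        show ?thesis by (rule less.IH[OF lt refl cc P(3) P(4) P(5) P(6) S(3) S'(3) S(5) S'(5) S(6) S'(6)])
      qed
      have e2: "card (gsect U A (insert k I) K \<inter> U1) = card (gsect U A (insert k' I') K' \<inter> U1)"
      proof -
        have lt: "4 * (m - card (insert k I)) + (3 - card K) < n" using P(1) S(10) S(11) by arith
        have cc: "card (insert k I) = card (insert k' I')" using S(10) S'(10) P(3) by simp
        have rd: "run_decomp (insert k I) = run_decomp (insert k' I')" using S(8) S'(8) P(4) by simp
        show ?thesis by (rule less.IH[OF lt refl P(2) cc rd S(4) S'(4) P(7) P(8) P(9) P(10) S(7) S'(7)])
      qed
      show ?thesis
        unfolding S(12) S'(12) using card_Un_disjoint[OF fin1 fin1 S(13)] card_Un_disjoint[OF fin1 fin1 S'(13)] e1 e2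
        by simp
    qed
  qed
qed

end

theorem lemma4p25:
  fixes U :: "'a set" and A :: "nat \<Rightarrow> 'a set" and m :: nat
  assumes "finite U"
    and "\<forall>i\<in>{1..m}. A i \<subseteq> U"
    and "harmonic U A m"
    and "card U < m * (m - 2)"
    and "m \<ge> 51"
  shows "\<exists>U1 U2. U1 \<union> U2 = U \<and> U1 \<inter> U2 = {}
    \<and> harmonic U1 (\<lambda>i. A i \<inter> U1) m \<and> harmonic U2 (\<lambda>i. A i \<inter> U2) m
    \<and> (\<forall>I. I \<subseteq> {1..m} \<and> nonconsecutive I \<and> card I = 3 \<longrightarrow>
          gsect U1 (\<lambda>i. A i \<inter> U1) I {} = {} \<and> gsect U2 (\<lambda>i. A i \<inter> U2) {} I = {})"
proof -
  interpret H: hsys U A m using assms by unfold_locales auto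
  define V1 where "V1 = H.U1"
  define V2 where "V2 = U - V1"
  have V1U: "V1 \<subseteq> U" unfolding V1_def using H.U1_sub .
  have V2U: "V2 \<subseteq> U" unfolding V2_def by auto
  have e1: "gsect V1 (\<lambda>i. A i \<inter> V1) I {} = gsect U A I {} \<inter> V1" for I
    by (rule gsect_restrict[OF V1U])
  have e2: "gsect V2 (\<lambda>i. A i \<inter> V2) I {} = gsect U A I {} - (gsect U A I {} \<inter> V1)" for I
    unfolding V2_def gsect_def by auto
  have sep0: "sep I {}" for I unfolding sep_def by auto
  have nc0: "nonconsecutive {}" unfolding nonconsecutive_def by auto
  have h1: "card (gsect U A I {} \<inter> V1) = card (gsect U A J {} \<inter> V1)"
    if IJ: "I \<subseteq> {1..m}" "J \<subseteq> {1..m}" "run_decomp I = run_decomp J" for I J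
  proof -
    have "card I = card J" using card_run_decomp[OF fin_sub[OF IJ(1)]] card_run_decomp[OF fin_sub[OF IJ(2)]] IJ(3) by simp
    then show ?thesis unfolding V1_def
      by (rule H.U1C[OF refl refl _ IJ(3) IJ(1) IJ(2) _ _ nc0 nc0 sep0 sep0]) auto
  qed
  have fg: "finite (gsect U A I {})" for I using assms(1) gsect_sub finite_subset by metis
  have d: "card (gsect U A I {} - gsect U A I {} \<inter> V1) = card (gsect U A I {}) - card (gsect U A I {} \<inter> V1)" for I
    by (rule card_Diff_subset) (use fg in auto)
  have harm1: "harmonic V1 (\<lambda>i. A i \<inter> V1) m"
    unfolding harmonic_def e1 using h1 by blast
  have harm2: "harmonic V2 (\<lambda>i. A i \<inter> V2) m"
    unfolding harmonic_def e2
  proof (intro allI impI)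
    fix I J assume IJ: "I \<subseteq> {1..m} \<and> J \<subseteq> {1..m} \<and> run_decomp I = run_decomp J"
    have "card (gsect U A I {}) = card (gsect U A J {})" using assms(3) IJ unfolding harmonic_def by blast
    moreover have "card (gsect U A I {} \<inter> V1) = card (gsect U A J {} \<inter> V1)" using h1 IJ by blast
    ultimately show "card (gsect U A I {} - gsect U A I {} \<inter> V1) = card (gsect U A J {} - gsect U A J {} \<inter> V1)"
      using d[of I] d[of J] by simp
  qed
  have tri: "gsect V1 (\<lambda>i. A i \<inter> V1) I {} = {} \<and> gsect V2 (\<lambda>i. A i \<inter> V2) {} I = {}"
    if I: "I \<subseteq> {1..m}" "nonconsecutive I" "card I = 3" for I
  proof
    show "gsect V1 (\<lambda>i. A i \<inter> V1) I {} = {}"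
      using I unfolding e1 V1_def H.U1_def H.hasT_def gsect_def by blast
    show "gsect V2 (\<lambda>i. A i \<inter> V2) {} I = {}"
    proof (rule ccontr)
      assume "gsect V2 (\<lambda>i. A i \<inter> V2) {} I \<noteq> {}"
      then obtain x where x: "x \<in> V2" "\<forall>i\<in>I. x \<notin> A i" unfolding gsect_def by auto
      then have "x \<in> U" "H.hasT x" unfolding V2_def V1_def H.U1_def by auto
      then obtain T where T: "T \<subseteq> {1..m}" "nonconsecutive T" "card T = 3" "\<forall>i\<in>T. x \<in> A i"
        unfolding H.hasT_def by blast
      show False by (rule H.BIGmix[OF \<open>x \<in> U\<close> T I x(2)])
    qed
  qed
  show ?thesis
    by (rule exI[of _ V1], rule exI[of _ V2]) (use V1U harm1 harm2 tri in \<open>auto simp: V2_def\<close>)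
qed

end
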